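(* Let $\mathbb{P}^3=\mathrm{Proj}\,\mathbb{F}_q[x,y,z,w]$ and $$g=x^qy-xy^q+z^qw-zw^q.$$ Then $V(g)\subset\mathbb{P}^3$ is a smooth, geometrically irreducible surface of degree $q+1$ with $V(g)(\mathbb{F}_q)=\mathbb{P}^3(\mathbb{F}_q)$, and $q+1$ is the minimal possible degree of a surface $V(h)$, $h\in\mathbb{F}_q[x,y,z,w]$ homogeneous and nonzero, with $V(h)(\mathbb{F}_q)=\mathbb{P}^3(\mathbb{F}_q)$.
   Context: $\mathbb{F}_q$ is the finite field of order $q=p^r$. For a projective $\mathbb{F}_q$-scheme $X$, $X(\mathbb{F}_q)$ denotes its set of $\mathbb{F}_q$-rational points. *)

theory Defs
  imports "HOL-Computational_Algebra.Polynomial" "HOL-Library.Cardinality"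
begin

text \<open>Polynomials in the four variables x, y, z, w over a ring 'a are encoded as
  iterated univariate polynomials: x is the outermost variable, w the innermost.\<close>

type_synonym 'a mpoly4 = "'a poly poly poly poly"

definition varX :: "'a::comm_ring_1 mpoly4" where "varX = [:0, 1:]"
definition varY :: "'a::comm_ring_1 mpoly4" where "varY = [:[:0, 1:]:]"
definition varZ :: "'a::comm_ring_1 mpoly4" where "varZ = [:[:[:0, 1:]:]:]"
definition varW :: "'a::comm_ring_1 mpoly4" where "varW = [:[:[:[:0, 1:]:]:]:]"

definition coeff4 :: "'a::zero mpoly4 \<Rightarrow> nat \<Rightarrow> nat \<Rightarrow> nat \<Rightarrow> nat \<Rightarrow> 'a" where
  "coeff4 g i j k l = coeff (coeff (coeff (coeff g i) j) k) l"

definition homogeneous4 :: "'a::zero mpoly4 \<Rightarrow> nat \<Rightarrow> bool" where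
  "homogeneous4 g d \<longleftrightarrow> (\<forall>i j k l. coeff4 g i j k l \<noteq> 0 \<longrightarrow> i + j + k + l = d)"

definition eval4 :: "'a::comm_semiring_0 mpoly4 \<Rightarrow> 'a \<Rightarrow> 'a \<Rightarrow> 'a \<Rightarrow> 'a \<Rightarrow> 'a" where
  "eval4 g x y z w = poly (poly (poly (poly g [:[:[:x:]:]:]) [:[:y:]:]) [:z:]) w"

definition map4 :: "('a::zero \<Rightarrow> 'b::zero) \<Rightarrow> 'a mpoly4 \<Rightarrow> 'b mpoly4" where
  "map4 f g = map_poly (map_poly (map_poly (map_poly f))) g"

definition dX4 :: "'a::{comm_semiring_1,semiring_no_zero_divisors} mpoly4 \<Rightarrow> 'a mpoly4" where
  "dX4 g = pderiv g"
definition dY4 :: "'a::{comm_semiring_1,semiring_no_zero_divisors} mpoly4 \<Rightarrow> 'a mpoly4" where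
  "dY4 g = map_poly pderiv g"
definition dZ4 :: "'a::{comm_semiring_1,semiring_no_zero_divisors} mpoly4 \<Rightarrow> 'a mpoly4" where
  "dZ4 g = map_poly (map_poly pderiv) g"
definition dW4 :: "'a::{comm_semiring_1,semiring_no_zero_divisors} mpoly4 \<Rightarrow> 'a mpoly4" where
  "dW4 g = map_poly (map_poly (map_poly pderiv)) g"

text \<open>Set of K-rational points of the projective hypersurface V(g), represented by
  their (nonzero) homogeneous coordinate vectors; P^3(K) corresponds to all nonzero vectors.\<close>
definition proj_points :: "('a::zero \<times> 'a \<times> 'a \<times> 'a) set" where
  "proj_points = UNIV - {(0, 0, 0, 0)}"

definition hyp_points :: "'a::comm_semiring_0 mpoly4 \<Rightarrow> ('a \<times> 'a \<times> 'a \<times> 'a) set" where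
  "hyp_points g = {(x, y, z, w). (x, y, z, w) \<in> proj_points \<and> eval4 g x y z w = 0}"

text \<open>Jacobian criterion: the projective hypersurface V(G) over an algebraically
  closed field has no singular point.\<close>
definition nonsingular4 :: "'a::field mpoly4 \<Rightarrow> bool" where
  "nonsingular4 G \<longleftrightarrow> (\<forall>(x, y, z, w) \<in> hyp_points G.
      \<not> (eval4 (dX4 G) x y z w = 0 \<and> eval4 (dY4 G) x y z w = 0 \<and>
         eval4 (dZ4 G) x y z w = 0 \<and> eval4 (dW4 G) x y z w = 0))"

definition field_emb :: "('a::field \<Rightarrow> 'b::field) \<Rightarrow> bool" where
  "field_emb \<phi> \<longleftrightarrow> \<phi> 1 = 1 \<and> (\<forall>a b. \<phi> (a + b) = \<phi> a + \<phi> b) \<and> (\<forall>a b. \<phi> (a * b) = \<phi> a * \<phi> b)"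

definition g_surf :: "nat \<Rightarrow> 'a::comm_ring_1 mpoly4" where
  "g_surf q = varX ^ q * varY - varX * varY ^ q + varZ ^ q * varW - varZ * varW ^ q"

end

theory Submission
  imports Defs
begin


definition mc :: "'a::zero \<Rightarrow> nat \<Rightarrow> nat \<Rightarrow> nat \<Rightarrow> nat \<Rightarrow> 'a mpoly4" where
  "mc c i j k l = monom (monom (monom (monom c l) k) j) i"

lemma coeff4_mc: "coeff4 (mc c i j k l) a b cc e = (if a=i \<and> b=j \<and> cc=k \<and> e=l then c else 0)"
  by (simp add: coeff4_def mc_def coeff_monom)

lemma mc_mult: "mc (a::'a::comm_semiring_1) i j k l * mc b i' j' k' l' = mc (a*b) (i+i') (j+j') (k+k') (l+l')"
  by (simp add: mc_def mult_monom)

lemma mc_power: "mc (a::'a::comm_semiring_1) i j k l ^ n = mc (a^n) (i*n) (j*n) (k*n) (l*n)"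
  by (induction n) (simp_all add: mc_mult, simp add: mc_def)

lemma vars_mc: "varX = mc (1::'a::comm_ring_1) 1 0 0 0" "varY = mc (1::'a::comm_ring_1) 0 1 0 0"
  "varZ = mc (1::'a::comm_ring_1) 0 0 1 0" "varW = mc (1::'a::comm_ring_1) 0 0 0 1"
  by (simp_all add: mc_def varX_def varY_def varZ_def varW_def monom_Suc monom_0 one_pCons)

lemma mc_neg: "- mc (c::'a::comm_ring_1) i j k l = mc (-c) i j k l"
  by (simp add: mc_def minus_monom)

lemma g_mc: "g_surf q = mc (1::'a::comm_ring_1) q 1 0 0 + mc (-1) 1 q 0 0 + mc 1 0 0 q 1 + mc (-1) 0 0 1 q"
  by (simp add: g_surf_def vars_mc mc_power mc_mult mc_neg flip: mc_neg)



lemma eval4_mc: "eval4 (mc (c::'a::comm_ring_1) i j k l) x y z w = c * x^i * y^j * z^k * w^l"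
  by (simp add: eval4_def mc_def poly_monom)

lemma eval4_add: "eval4 (p + r) x y z w = eval4 p x y z w + eval4 (r::'a::comm_ring_1 mpoly4) x y z w"
  by (simp add: eval4_def)

lemma map_poly_add_hom:
  assumes "f 0 = 0" "\<And>a b. f (a+b) = f a + f b"
  shows "map_poly f (p + r) = map_poly f p + map_poly f r"
  by (intro poly_eqI) (simp add: coeff_map_poly assms)

lemma map4_add: assumes "field_emb \<phi>"
  shows "map4 \<phi> (p + r) = map4 \<phi> p + map4 \<phi> r"
proof -
  have f0: "\<phi> 0 = 0" using assms unfolding field_emb_def by (metis add_cancel_right_right add_0)
  have fa: "\<phi> (a+b) = \<phi> a + \<phi> b" for a b using assms unfolding field_emb_def by auto
  show ?thesis unfolding map4_def
    by (intro map_poly_add_hom; simp add: f0 map_poly_add_hom fa)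
qed

lemma map4_mc: assumes "field_emb \<phi>"
  shows "map4 \<phi> (mc c i j k l) = mc (\<phi> c) i j k l"
proof -
  have f0: "\<phi> 0 = 0" using assms unfolding field_emb_def by (metis add_cancel_right_right add_0)
  show ?thesis unfolding map4_def mc_def by (simp add: map_poly_monom f0)
qed

lemma of_nat_mult_monom: "(of_nat n :: 'a::comm_semiring_1 poly) * monom c k = monom (of_nat n * c) k"
  by (simp only: of_nat_poly[of n] mult_pCons_left smult_monom) simp

lemma dX4_mc: "dX4 (mc (c::'a::{comm_ring_1,semiring_no_zero_divisors}) i j k l) = mc (of_nat i * c) (i - 1) j k l"
  by (simp add: dX4_def mc_def pderiv_monom of_nat_mult_monom)

lemma dY4_mc: "dY4 (mc (c::'a::{comm_ring_1,semiring_no_zero_divisors}) i j k l) = mc (of_nat j * c) i (j - 1) k l"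
  by (simp add: dY4_def mc_def pderiv_monom map_poly_monom of_nat_mult_monom)

lemma dZ4_mc: "dZ4 (mc (c::'a::{comm_ring_1,semiring_no_zero_divisors}) i j k l) = mc (of_nat k * c) i j (k - 1) l"
  by (simp add: dZ4_def mc_def pderiv_monom map_poly_monom of_nat_mult_monom)

lemma dW4_mc: "dW4 (mc (c::'a::{comm_ring_1,semiring_no_zero_divisors}) i j k l) = mc (of_nat l * c) i j k (l - 1)"
  by (simp add: dW4_def mc_def pderiv_monom map_poly_monom of_nat_mult_monom)

lemma dX4_add: "dX4 (p + r) = dX4 p + dX4 (r::'a::{comm_ring_1,semiring_no_zero_divisors} mpoly4)"
  by (simp add: dX4_def pderiv_add)
lemma dY4_add: "dY4 (p + r) = dY4 p + dY4 (r::'a::{comm_ring_1,semiring_no_zero_divisors} mpoly4)"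
  by (simp add: dY4_def map_poly_add_hom pderiv_add)
lemma dZ4_add: "dZ4 (p + r) = dZ4 p + dZ4 (r::'a::{comm_ring_1,semiring_no_zero_divisors} mpoly4)"
  by (simp add: dZ4_def map_poly_add_hom pderiv_add)
lemma dW4_add: "dW4 (p + r) = dW4 p + dW4 (r::'a::{comm_ring_1,semiring_no_zero_divisors} mpoly4)"
  by (simp add: dW4_def map_poly_add_hom pderiv_add)



lemma card_ge2: "2 \<le> CARD('a::{finite,field})"
proof -
  have "card {0::'a,1} \<le> CARD('a)" by (intro card_mono) auto
  thus ?thesis by simp
qed

lemma char_card: "(of_nat CARD('a) :: 'a::{finite,field}) = 0"
proof -
  have "(\<Sum>y\<in>UNIV. y + (1::'a)) = (\<Sum>y\<in>UNIV. y)"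
    by (rule sum.reindex_bij_witness[where i="\<lambda>y. y - 1" and j="\<lambda>y. y + 1"]) auto
  moreover have "(\<Sum>y\<in>UNIV. y + (1::'a)) = (\<Sum>y\<in>UNIV. y) + of_nat CARD('a)"
    by (simp add: sum.distrib)
  ultimately show ?thesis by simp
qed

lemma frob_card: "(x::'a::{finite,field}) ^ CARD('a) = x"
proof (cases "x = 0")
  case True thus ?thesis using card_ge2[where 'a='a] by (simp add: power_0_left)
next
  case False
  let ?N = "UNIV - {0::'a}"
  have bij: "bij_betw (\<lambda>y. x * y) ?N ?N"
    by (rule bij_betw_byWitness[where f'="\<lambda>y. y / x"]) (use False in auto)
  have e1: "(\<Prod>y\<in>?N. x * y) = (\<Prod>y\<in>?N. y)"
    using prod.reindex_bij_betw[OF bij, of "\<lambda>y. y"] by (simp only: o_def)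
  have e2: "(\<Prod>y\<in>?N. x * y) = x ^ card ?N * (\<Prod>y\<in>?N. y)"
    by (simp only: prod.distrib prod_constant)
  have nz: "(\<Prod>y\<in>?N. y) \<noteq> 0" by (subst prod_zero_iff) auto
  have "x ^ card ?N * (\<Prod>y\<in>?N. y) = (\<Prod>y\<in>?N. y)" using e1 e2 by simp
  hence "x ^ card ?N = 1" using nz by simp
  moreover have "card ?N = CARD('a) - 1" by (simp add: card_Diff_subset)
  ultimately have h1: "x ^ (CARD('a) - 1) = 1" by simp
  have "CARD('a) = Suc (CARD('a) - 1)" using card_ge2[where 'a='a] by simp
  hence "x ^ CARD('a) = x * x ^ (CARD('a) - 1)" by (metis power_Suc)
  thus ?thesis using h1 by simp
qed

lemma emb_0: "field_emb \<phi> \<Longrightarrow> \<phi> 0 = 0"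
  unfolding field_emb_def by (metis add_cancel_right_right add_0)

lemma emb_of_nat: "field_emb \<phi> \<Longrightarrow> \<phi> (of_nat n) = of_nat n"
  by (induction n) (auto simp: emb_0 field_emb_def)

lemma emb_neg1: "field_emb \<phi> \<Longrightarrow> \<phi> (-1) = -1"
proof -
  assume a: "field_emb \<phi>"
  have "\<phi> (-1 + 1) = \<phi> (-1) + \<phi> 1" using a unfolding field_emb_def by blast
  hence "\<phi> (-1) + \<phi> 1 = \<phi> 0" by simp
  thus ?thesis using a emb_0[OF a] unfolding field_emb_def by (simp add: eq_neg_iff_add_eq_0)
qed

lemma char_b: assumes "field_emb (\<phi>::'a::{finite,field} \<Rightarrow> 'b::field)"
  shows "(of_nat CARD('a) :: 'b) = 0"
  using emb_of_nat[OF assms, of "CARD('a)"] emb_0[OF assms] char_card[where 'a='a] by simp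


lemma map_g: assumes "field_emb (\<phi>::'a::{finite,field} \<Rightarrow> 'b::field)"
  shows "map4 \<phi> (g_surf q :: 'a mpoly4) = g_surf q"
  by (simp add: g_mc map4_add[OF assms] map4_mc[OF assms] emb_neg1[OF assms]) (use assms in \<open>simp add: field_emb_def\<close>)

lemma nonsing_g: assumes "(of_nat q :: 'b::field) = 0" "q \<ge> 2"
  shows "nonsingular4 (g_surf q :: 'b mpoly4)"
  unfolding nonsingular4_def
proof (clarify)
  fix x y z w :: 'b
  assume p: "(x, y, z, w) \<in> hyp_points (g_surf q)"
    and h: "eval4 (dX4 (g_surf q)) x y z w = 0" "eval4 (dY4 (g_surf q)) x y z w = 0"
     "eval4 (dZ4 (g_surf q)) x y z w = 0" "eval4 (dW4 (g_surf q)) x y z w = 0"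
  from h assms have "y^q = 0" "x^q = 0" "w^q = 0" "z^q = 0"
    by (simp_all add: g_mc dX4_add dY4_add dZ4_add dW4_add dX4_mc dY4_mc dZ4_mc dW4_mc eval4_add eval4_mc)
  hence "x = 0" "y = 0" "z = 0" "w = 0" by simp_all
  with p show False by (simp add: hyp_points_def proj_points_def)
qed



lemma coeff4_add: "coeff4 (p + r) i j k l = coeff4 p i j k l + coeff4 (r::'a::comm_ring_1 mpoly4) i j k l"
  by (simp add: coeff4_def)

lemma g_props:
  fixes q :: nat
  defines "q \<equiv> CARD('a::{finite,field})"
  shows "(g_surf q :: 'a mpoly4) \<noteq> 0 \<and> homogeneous4 (g_surf q :: 'a mpoly4) (q + 1)
       \<and> hyp_points (g_surf q :: 'a mpoly4) = proj_points"
proof (intro conjI)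
  have q2: "q \<ge> 2" unfolding q_def by (rule card_ge2)
  have "coeff4 (g_surf q :: 'a mpoly4) q 1 0 0 = 1"
    using q2 by (simp add: g_mc coeff4_add coeff4_mc)
  thus "(g_surf q :: 'a mpoly4) \<noteq> 0" by (auto simp: coeff4_def)
  show "homogeneous4 (g_surf q :: 'a mpoly4) (q + 1)"
    unfolding homogeneous4_def by (auto simp: g_mc coeff4_add coeff4_mc split: if_splits)
  have "eval4 (g_surf q :: 'a mpoly4) x y z w = 0" for x y z w
    by (simp add: g_mc eval4_add eval4_mc q_def frob_card)
  thus "hyp_points (g_surf q :: 'a mpoly4) = proj_points"
    by (auto simp: hyp_points_def)
qed



lemma map_poly_mult_hom:
  fixes f :: "'a::comm_semiring_1 \<Rightarrow> 'b::comm_semiring_1"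
  assumes f0: "f 0 = 0" and fa: "\<And>a b. f (a+b) = f a + f b" and fm: "\<And>a b. f (a*b) = f a * f b"
  shows "map_poly f (p * r) = map_poly f p * map_poly f r"
proof (intro poly_eqI)
  fix n
  have sumh: "f (\<Sum>i\<le>m. g i) = (\<Sum>i\<le>m. f (g i))" for m and g :: "nat \<Rightarrow> 'a"
    by (induction m) (simp_all add: f0 fa)
  show "coeff (map_poly f (p * r)) n = coeff (map_poly f p * map_poly f r) n"
    by (simp add: coeff_map_poly coeff_mult f0 sumh fm)
qed

lemma unit_const_factor:
  fixes G A :: "'b::field poly poly poly poly" and \<beta> :: "'b poly poly poly"
  assumes GA: "G = A * [:\<beta>:]"
   and lead: "coeff (coeff G q) 0 = 0" "coeff (coeff G q) 1 = 1" "degree (coeff G q) = 1"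
   and c0: "coeff (coeff G 0) 0 \<noteq> 0"
  shows "\<beta> dvd 1"
proof -
  have cG: "coeff G n = coeff A n * \<beta>" for n using GA by simp
  define a where "a = coeff A q"
  have aY: "a * \<beta> = coeff G q" using cG a_def by simp
  have Ynz: "coeff G q \<noteq> 0" using lead by auto
  have anz: "a \<noteq> 0" and bnz: "\<beta> \<noteq> 0" using aY Ynz by auto
  have dsum: "degree a + degree \<beta> = 1" using degree_mult_eq[OF anz bnz] aY lead by simp
  show ?thesis
  proof (cases "degree \<beta> = 0")
    case True
    then obtain b where b: "\<beta> = [:b:]" by (metis degree_0_id)
    have "smult b a = coeff G q" using aY b by simp
    hence "coeff (coeff G q) 1 = b * coeff a 1" by (metis coeff_smult)
    hence "b * coeff a 1 = 1" using lead by simp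
    hence "b dvd 1" by (metis dvdI)
    thus ?thesis using b by (simp add: is_unit_poly_iff)
  next
    case False
    hence "degree a = 0" using dsum by simp
    then obtain \<alpha> where al: "a = [:\<alpha>:]" by (metis degree_0_id)
    have alnz: "\<alpha> \<noteq> 0" using anz al by simp
    have "smult \<alpha> \<beta> = coeff G q" using aY al by simp
    hence "coeff (coeff G q) 0 = \<alpha> * coeff \<beta> 0" by (metis coeff_smult)
    hence "coeff \<beta> 0 = 0" using lead alnz by simp
    moreover have "coeff (coeff G 0) 0 = coeff (coeff A 0) 0 * coeff \<beta> 0"
      using cG by (simp add: coeff_mult_0)
    ultimately show ?thesis using c0 by simp
  qed
qed

lemma irr_main:
  fixes G :: "'b::field poly poly poly poly"
  assumes dG: "degree G = q" and q2: "q \<ge> 2"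
   and lead: "coeff (coeff G q) 0 = 0" "coeff (coeff G q) 1 = 1" "degree (coeff G q) = 1"
   and mid: "\<And>n. n \<ge> 1 \<Longrightarrow> coeff (coeff G n) 0 = 0"
   and c0: "coeff (coeff G 0) 0 \<noteq> 0"
  shows "irreducible G"
proof (rule irreducibleI)
  show G0: "G \<noteq> 0" using dG q2 by auto
  show "\<not> G dvd 1" using dG q2 by (auto simp: is_unit_poly_iff)
  fix A B assume GAB: "G = A * B"
  let ?h = "\<lambda>r::'b poly poly poly. coeff r 0"
  have hm: "map_poly ?h (A * B) = map_poly ?h A * map_poly ?h B"
    using map_poly_mult_hom[of ?h A B] by (simp add: coeff_mult_0)
  have mapG: "map_poly ?h G = [: coeff (coeff G 0) 0 :]"
  proof (rule poly_eqI)
    fix n show "coeff (map_poly ?h G) n = coeff [: coeff (coeff G 0) 0 :] n"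
      using mid[of n] by (cases n) (simp_all add: coeff_map_poly)
  qed
  have prod: "map_poly ?h A * map_poly ?h B = [: coeff (coeff G 0) 0 :]"
    using hm mapG GAB by simp
  hence nzA: "map_poly ?h A \<noteq> 0" and nzB: "map_poly ?h B \<noteq> 0" using c0 by auto
  have "degree (map_poly ?h A) + degree (map_poly ?h B) = 0"
    using degree_mult_eq[OF nzA nzB] prod by simp
  hence dA: "degree (map_poly ?h A) = 0" and dB: "degree (map_poly ?h B) = 0" by auto
  have zA: "coeff (coeff A i) 0 = 0" if "i \<ge> 1" for i
    using coeff_eq_0[of "map_poly ?h A" i] dA that by (simp add: coeff_map_poly)
  have zB: "coeff (coeff B i) 0 = 0" if "i \<ge> 1" for i
    using coeff_eq_0[of "map_poly ?h B" i] dB that by (simp add: coeff_map_poly)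
  have Anz: "A \<noteq> 0" and Bnz: "B \<noteq> 0" using G0 GAB by auto
  show "A dvd 1 \<or> B dvd 1"
  proof (cases "degree A = 0")
    case True
    then obtain \<alpha> where al: "A = [:\<alpha>:]" by (metis degree_0_id)
    have "G = B * [:\<alpha>:]" using GAB al by (simp add: mult.commute)
    hence "\<alpha> dvd 1" by (rule unit_const_factor[OF _ lead c0])
    thus ?thesis using al by (simp add: is_unit_poly_iff)
  next
    case dA1: False
    show ?thesis
    proof (cases "degree B = 0")
      case True
      then obtain \<beta> where be: "B = [:\<beta>:]" by (metis degree_0_id)
      have "G = A * [:\<beta>:]" using GAB be by simp
      hence "\<beta> dvd 1" by (rule unit_const_factor[OF _ lead c0])
      thus ?thesis using be by (simp add: is_unit_poly_iff)
    next
      case False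
      have LL: "lead_coeff A * lead_coeff B = coeff G q"
        using lead_coeff_mult[of A B] GAB dG by simp
      have "coeff (lead_coeff A) 0 = 0" using zA dA1 by simp
      moreover have "coeff (lead_coeff B) 0 = 0" using zB False by simp
      ultimately have "coeff (lead_coeff A * lead_coeff B) 1 = 0"
        by (simp add: coeff_mult atMost_Suc)
      hence "coeff (coeff G q) 1 = 0" using LL by simp
      thus ?thesis using lead by simp
    qed
  qed
qed



lemma coeff_mc: "coeff (mc c i j k l) n = (if n = i then monom (monom (monom c l) k) j else 0)"
  by (simp add: mc_def coeff_monom)

lemma irr_g: assumes q2: "q \<ge> 2" shows "irreducible (g_surf q :: 'b::field mpoly4)"
proof -
  let ?G = "g_surf q :: 'b mpoly4"
  have cG: "coeff ?G n = (if n = q then monom 1 1 else 0) + (if n = 1 then monom (monom (monom (-1) 0) 0) q else 0)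
     + (if n = 0 then monom (monom (monom 1 1) q) 0 + monom (monom (monom (-1) q) 1) 0 else 0)" for n
    using q2 by (simp add: g_mc coeff_mc)
  have cq: "coeff ?G q = monom 1 1" using q2 cG[of q] by simp
  have dG: "degree ?G = q"
  proof (rule antisym)
    show "degree ?G \<le> q" by (rule degree_le) (use q2 cG in auto)
    show "q \<le> degree ?G" by (rule le_degree) (simp add: cq)
  qed
  have c0: "coeff (coeff (coeff ?G 0) 0) q = monom 1 1" using q2 cG[of 0] by (simp add: coeff_monom)
  show ?thesis
  proof (rule irr_main[OF dG q2])
    show "coeff (coeff ?G q) 0 = 0" "coeff (coeff ?G q) 1 = 1" "degree (coeff ?G q) = 1"
      using cq by (simp_all add: coeff_monom degree_monom_eq)
    show "coeff (coeff ?G n) 0 = 0" if "n \<ge> 1" for n using that q2 cG[of n] by (simp add: coeff_monom)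
    show "coeff (coeff ?G 0) 0 \<noteq> 0" using c0 by (metis coeff_0 monom_eq_0_iff one_neq_zero)
  qed
qed



lemma poly_sum_N:
  fixes p :: "'a::comm_semiring_1 poly"
  assumes "\<And>i. i \<ge> N \<Longrightarrow> coeff p i = 0"
  shows "poly p a = (\<Sum>i<N. coeff p i * a^i)"
proof (cases "p = 0")
  case True thus ?thesis by simp
next
  case False
  hence "degree p < N" using assms leading_coeff_0_iff not_less by blast
  hence "(\<Sum>i<N. coeff p i * a^i) = (\<Sum>i\<le>degree p. coeff p i * a^i)"
    by (intro sum.mono_neutral_right) (auto simp: coeff_eq_0)
  thus ?thesis using poly_altdef[of p a] by simp
qed

lemma L2:
  fixes c :: "'a::comm_ring_1 poly poly"
  assumes "\<And>k l. N \<le> k \<or> N \<le> l \<Longrightarrow> coeff (coeff c k) l = 0"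
  shows "poly (poly c [:z:]) w = (\<Sum>k<N. \<Sum>l<N. coeff (coeff c k) l * z^k * w^l)"
proof -
  have ck: "coeff c k = 0" if "k \<ge> N" for k using assms that by (intro poly_eqI) simp
  have "poly (poly c [:z:]) w = poly (\<Sum>k<N. coeff c k * [:z:]^k) w" by (subst poly_sum_N[OF ck]) auto
  also have "\<dots> = (\<Sum>k<N. poly (coeff c k) w * z^k)" by (simp add: poly_sum poly_monom)
  also have "\<dots> = (\<Sum>k<N. \<Sum>l<N. coeff (coeff c k) l * z^k * w^l)"
    by (intro sum.cong refl, subst poly_sum_N[where N=N]) (auto simp: assms sum_distrib_left mult_ac)
  finally show ?thesis .
qed

lemma L3:
  fixes c :: "'a::comm_ring_1 poly poly poly"
  assumes "\<And>j k l. N \<le> j \<or> N \<le> k \<or> N \<le> l \<Longrightarrow> coeff (coeff (coeff c j) k) l = 0"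
  shows "poly (poly (poly c [:[:y:]:]) [:z:]) w = (\<Sum>j<N. \<Sum>k<N. \<Sum>l<N. coeff (coeff (coeff c j) k) l * y^j * z^k * w^l)"
proof -
  have cj: "coeff c j = 0" if "j \<ge> N" for j using assms that by (intro poly_eqI) simp
  have "poly (poly (poly c [:[:y:]:]) [:z:]) w = poly (poly (\<Sum>j<N. coeff c j * [:[:y:]:]^j) [:z:]) w"
    by (subst poly_sum_N[OF cj]) auto
  also have "\<dots> = (\<Sum>j<N. poly (poly (coeff c j) [:z:]) w * y^j)" by (simp add: poly_sum poly_monom)
  also have "\<dots> = (\<Sum>j<N. \<Sum>k<N. \<Sum>l<N. coeff (coeff (coeff c j) k) l * y^j * z^k * w^l)"
    by (intro sum.cong refl, subst L2[where N=N]) (auto simp: assms sum_distrib_left mult_ac)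
  finally show ?thesis .
qed

lemma eval4_sum:
  fixes p :: "'a::comm_ring_1 mpoly4"
  assumes "\<And>i j k l. N \<le> i \<or> N \<le> j \<or> N \<le> k \<or> N \<le> l \<Longrightarrow> coeff4 p i j k l = 0"
  shows "eval4 p x y z w = (\<Sum>i<N. \<Sum>j<N. \<Sum>k<N. \<Sum>l<N. coeff4 p i j k l * x^i * y^j * z^k * w^l)"
    (is "_ = ?R")
proof -
  have ci: "coeff p i = 0" if "i \<ge> N" for i using assms that by (intro poly_eqI) (simp add: coeff4_def)
  have "eval4 p x y z w = poly (poly (poly (\<Sum>i<N. coeff p i * [:[:[:x:]:]:]^i) [:[:y:]:]) [:z:]) w"
    unfolding eval4_def by (subst poly_sum_N[OF ci]) auto
  also have "\<dots> = (\<Sum>i<N. poly (poly (poly (coeff p i) [:[:y:]:]) [:z:]) w * x^i)" by (simp add: poly_sum poly_monom)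
  also have "\<dots> = ?R"
    by (intro sum.cong refl, subst L3[where N=N]) (auto simp: assms[unfolded coeff4_def] coeff4_def sum_distrib_left mult_ac)
  finally show ?thesis .
qed



lemma V1:
  fixes a :: "nat \<Rightarrow> 'a::{finite,field}"
  assumes "\<And>x. (\<Sum>i<CARD('a). a i * x^i) = 0"
  shows "i < CARD('a) \<Longrightarrow> a i = 0"
proof -
  let ?q = "CARD('a)"
  define P where "P = (\<Sum>i<?q. monom (a i) i)"
  have cP: "coeff P n = (if n < ?q then a n else 0)" for n
    by (simp add: P_def coeff_sum coeff_monom)
  have pP: "poly P x = 0" for x using assms[of x] by (simp add: P_def poly_sum poly_monom)
  have "P = 0"
  proof (rule ccontr)
    assume nz: "P \<noteq> 0"
    have "degree P < ?q"
    proof -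
      have "degree P \<le> ?q - 1" by (rule degree_le) (auto simp: cP)
      thus ?thesis using card_ge2[where 'a='a] by simp
    qed
    moreover have "card {x. poly P x = 0} \<le> degree P" by (rule card_poly_roots_bound[OF nz])
    moreover have "{x. poly P x = 0} = UNIV" using pP by auto
    ultimately show False by simp
  qed
  thus "i < ?q \<Longrightarrow> a i = 0" using cP[of i] by simp
qed

lemma V2:
  fixes c :: "nat \<Rightarrow> nat \<Rightarrow> 'a::{finite,field}"
  assumes "\<And>z w. (\<Sum>k<CARD('a). \<Sum>l<CARD('a). c k l * z^k * w^l) = 0"
  shows "k < CARD('a) \<Longrightarrow> l < CARD('a) \<Longrightarrow> c k l = 0"
proof -
  assume kl: "k < CARD('a)" "l < CARD('a)"
  have "(\<Sum>l<CARD('a). c k l * w^l) = 0" for w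
  proof (rule V1[OF _ kl(1), where a="\<lambda>k. \<Sum>l<CARD('a). c k l * w^l"])
    fix z show "(\<Sum>k<CARD('a). (\<Sum>l<CARD('a). c k l * w^l) * z^k) = 0"
      using assms[of z w] by (simp add: sum_distrib_left sum_distrib_right mult_ac)
  qed
  thus "c k l = 0" using V1[of "c k", OF _ kl(2)] by simp
qed

lemma V3:
  fixes c :: "nat \<Rightarrow> nat \<Rightarrow> nat \<Rightarrow> 'a::{finite,field}"
  assumes "\<And>y z w. (\<Sum>j<CARD('a). \<Sum>k<CARD('a). \<Sum>l<CARD('a). c j k l * y^j * z^k * w^l) = 0"
  shows "j < CARD('a) \<Longrightarrow> k < CARD('a) \<Longrightarrow> l < CARD('a) \<Longrightarrow> c j k l = 0"
proof -
  assume jkl: "j < CARD('a)" "k < CARD('a)" "l < CARD('a)"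
  have "(\<Sum>k<CARD('a). \<Sum>l<CARD('a). c j k l * z^k * w^l) = 0" for z w
  proof (rule V1[OF _ jkl(1), where a="\<lambda>j. \<Sum>k<CARD('a). \<Sum>l<CARD('a). c j k l * z^k * w^l"])
    fix y show "(\<Sum>j<CARD('a). (\<Sum>k<CARD('a). \<Sum>l<CARD('a). c j k l * z^k * w^l) * y^j) = 0"
      using assms[of y z w] by (simp add: sum_distrib_left sum_distrib_right mult_ac)
  qed
  thus "c j k l = 0" using V2[of "c j", OF _ jkl(2,3)] by simp
qed

lemma V4:
  fixes c :: "nat \<Rightarrow> nat \<Rightarrow> nat \<Rightarrow> nat \<Rightarrow> 'a::{finite,field}"
  assumes "\<And>x y z w. (\<Sum>i<CARD('a). \<Sum>j<CARD('a). \<Sum>k<CARD('a). \<Sum>l<CARD('a). c i j k l * x^i * y^j * z^k * w^l) = 0"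
  shows "i < CARD('a) \<Longrightarrow> j < CARD('a) \<Longrightarrow> k < CARD('a) \<Longrightarrow> l < CARD('a) \<Longrightarrow> c i j k l = 0"
proof -
  assume ijkl: "i < CARD('a)" "j < CARD('a)" "k < CARD('a)" "l < CARD('a)"
  have "(\<Sum>j<CARD('a). \<Sum>k<CARD('a). \<Sum>l<CARD('a). c i j k l * y^j * z^k * w^l) = 0" for y z w
  proof (rule V1[OF _ ijkl(1), where a="\<lambda>i. \<Sum>j<CARD('a). \<Sum>k<CARD('a). \<Sum>l<CARD('a). c i j k l * y^j * z^k * w^l"])
    fix x show "(\<Sum>i<CARD('a). (\<Sum>j<CARD('a). \<Sum>k<CARD('a). \<Sum>l<CARD('a). c i j k l * y^j * z^k * w^l) * x^i) = 0"
      using assms[of x y z w] by (simp add: sum_distrib_left sum_distrib_right mult_ac)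
  qed
  thus "c i j k l = 0" using V3[of "c i", OF _ ijkl(2,3,4)] by simp
qed



lemma coeff4_zero_imp: "(\<And>i j k l. coeff4 p i j k l = 0) \<Longrightarrow> p = 0"
  unfolding coeff4_def by (intro poly_eqI) simp

lemma eval4_0: "eval4 (p::'a::comm_ring_1 mpoly4) 0 0 0 0 = coeff4 p 0 0 0 0"
  by (simp add: eval4_def poly_0_coeff_0 coeff4_def)

lemma mult_ifdelta: "(a::'a::semiring_1) * (if P then 1 else 0) = (if P then a else 0)" by simp

lemma min_deg:
  fixes h :: "'a::{finite,field} mpoly4"
  assumes hnz: "h \<noteq> 0" and hom: "homogeneous4 h d" and hp: "hyp_points h = proj_points"
  shows "CARD('a) + 1 \<le> d"
proof (rule ccontr)
  let ?q = "CARD('a)"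
  assume "\<not> ?q + 1 \<le> d"
  hence dq: "d \<le> ?q" by simp
  have q2: "?q \<ge> 2" by (rule card_ge2)
  have homD: "coeff4 h i j k l \<noteq> 0 \<Longrightarrow> i + j + k + l = d" for i j k l
    using hom unfolding homogeneous4_def by blast
  have vnz: "eval4 h x y z w = 0" if "(x,y,z,w) \<noteq> (0,0,0,0)" for x y z w
  proof -
    have "(x,y,z,w) \<in> proj_points" using that by (simp add: proj_points_def)
    hence "(x,y,z,w) \<in> hyp_points h" using hp by simp
    thus ?thesis by (simp add: hyp_points_def)
  qed
  have c0: "coeff4 h 0 0 0 0 = 0"
  proof (cases "d = 0")
    case False thus ?thesis using homD[of 0 0 0 0] by auto
  next
    case True
    have bnd: "coeff4 h i j k l = 0" if "Suc ?q \<le> i \<or> Suc ?q \<le> j \<or> Suc ?q \<le> k \<or> Suc ?q \<le> l" for i j k l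
    proof (rule ccontr)
      assume "coeff4 h i j k l \<noteq> 0"
      hence "i + j + k + l = d" by (rule homD)
      thus False using that dq by auto
    qed
    have "eval4 h 1 0 0 0 = (\<Sum>i<Suc ?q. \<Sum>j<Suc ?q. \<Sum>k<Suc ?q. \<Sum>l<Suc ?q. coeff4 h i j k l * 1^i * 0^j * 0^k * 0^l)"
      by (rule eval4_sum[where N="Suc ?q", OF bnd])
    also have "\<dots> = (\<Sum>i<Suc ?q. coeff4 h i 0 0 0)"
      by (simp add: power_0_left mult_ifdelta sum.delta)
    also have "\<dots> = (\<Sum>i\<in>{0}. coeff4 h i 0 0 0)"
      by (rule sum.mono_neutral_right) (use homD True in auto)
    finally show ?thesis using vnz[of 1 0 0 0] by simp
  qed
  have van: "eval4 h x y z w = 0" for x y z w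
    using vnz[of x y z w] c0 eval4_0[of h] by (cases "(x,y,z,w) = (0,0,0,0)") auto
  define cX where "cX = coeff4 h ?q 0 0 0"
  define cY where "cY = coeff4 h 0 ?q 0 0"
  define cZ where "cZ = coeff4 h 0 0 ?q 0"
  define cW where "cW = coeff4 h 0 0 0 ?q"
  define h2 where "h2 = h + mc (-cX) ?q 0 0 0 + mc cX 1 0 0 0 + mc (-cY) 0 ?q 0 0 + mc cY 0 1 0 0
     + mc (-cZ) 0 0 ?q 0 + mc cZ 0 0 1 0 + mc (-cW) 0 0 0 ?q + mc cW 0 0 0 1"
  have ch2: "coeff4 h2 i j k l = coeff4 h i j k l
     + (if i = ?q \<and> j = 0 \<and> k = 0 \<and> l = 0 then - cX else 0) + (if i = 1 \<and> j = 0 \<and> k = 0 \<and> l = 0 then cX else 0)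
     + (if i = 0 \<and> j = ?q \<and> k = 0 \<and> l = 0 then - cY else 0) + (if i = 0 \<and> j = 1 \<and> k = 0 \<and> l = 0 then cY else 0)
     + (if i = 0 \<and> j = 0 \<and> k = ?q \<and> l = 0 then - cZ else 0) + (if i = 0 \<and> j = 0 \<and> k = 1 \<and> l = 0 then cZ else 0)
     + (if i = 0 \<and> j = 0 \<and> k = 0 \<and> l = ?q then - cW else 0) + (if i = 0 \<and> j = 0 \<and> k = 0 \<and> l = 1 then cW else 0)"
    for i j k l
    unfolding h2_def by (simp only: coeff4_add coeff4_mc)
  have vh2: "eval4 h2 x y z w = 0" for x y z w
    unfolding h2_def by (simp add: eval4_add eval4_mc van frob_card)
  have bnd2: "coeff4 h2 i j k l = 0" if H: "?q \<le> i \<or> ?q \<le> j \<or> ?q \<le> k \<or> ?q \<le> l" for i j k l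
  proof -
    have pure: "coeff4 h i j k l = 0" if "\<not> (i = a \<and> j = b \<and> k = c \<and> l = e)" "a + b + c + e = ?q"
       "a \<le> i" "b \<le> j" "c \<le> k" "e \<le> l" for a b c e
    proof (rule ccontr)
      assume "coeff4 h i j k l \<noteq> 0"
      hence "i + j + k + l = d" by (rule homD)
      thus False using that dq by auto
    qed
    consider "?q \<le> i" | "?q \<le> j" | "?q \<le> k" | "?q \<le> l" using H by blast
    thus ?thesis
    proof cases
      case 1
      hence "coeff4 h2 i j k l = coeff4 h i j k l + (if i = ?q \<and> j = 0 \<and> k = 0 \<and> l = 0 then - cX else 0)"
        using ch2[of i j k l] q2 by simp
      thus ?thesis using pure[of ?q 0 0 0] 1 unfolding cX_def by (cases "i = ?q \<and> j = 0 \<and> k = 0 \<and> l = 0") auto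
    next
      case 2
      hence "coeff4 h2 i j k l = coeff4 h i j k l + (if i = 0 \<and> j = ?q \<and> k = 0 \<and> l = 0 then - cY else 0)"
        using ch2[of i j k l] q2 by simp
      thus ?thesis using pure[of 0 ?q 0 0] 2 unfolding cY_def by (cases "i = 0 \<and> j = ?q \<and> k = 0 \<and> l = 0") auto
    next
      case 3
      hence "coeff4 h2 i j k l = coeff4 h i j k l + (if i = 0 \<and> j = 0 \<and> k = ?q \<and> l = 0 then - cZ else 0)"
        using ch2[of i j k l] q2 by simp
      thus ?thesis using pure[of 0 0 ?q 0] 3 unfolding cZ_def by (cases "i = 0 \<and> j = 0 \<and> k = ?q \<and> l = 0") auto
    next
      case 4
      hence "coeff4 h2 i j k l = coeff4 h i j k l + (if i = 0 \<and> j = 0 \<and> k = 0 \<and> l = ?q then - cW else 0)"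
        using ch2[of i j k l] q2 by simp
      thus ?thesis using pure[of 0 0 0 ?q] 4 unfolding cW_def by (cases "i = 0 \<and> j = 0 \<and> k = 0 \<and> l = ?q") auto
    qed
  qed
  have z2: "coeff4 h2 i j k l = 0" for i j k l
  proof (cases "i < ?q \<and> j < ?q \<and> k < ?q \<and> l < ?q")
    case True
    have "\<And>x y z w. (\<Sum>i<?q. \<Sum>j<?q. \<Sum>k<?q. \<Sum>l<?q. coeff4 h2 i j k l * x^i * y^j * z^k * w^l) = 0"
      using vh2 eval4_sum[where N="?q", OF bnd2] by metis
    thus ?thesis using V4[where c="coeff4 h2"] True by blast
  next
    case False thus ?thesis using bnd2 by auto
  qed
  have cX0: "cX = 0"
  proof (rule ccontr)
    assume "cX \<noteq> 0"
    hence "?q = d" using homD[of ?q 0 0 0] unfolding cX_def by simp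
    moreover have "coeff4 h 1 0 0 0 \<noteq> 0" using z2[of 1 0 0 0] \<open>cX \<noteq> 0\<close> q2 unfolding ch2 by auto
    hence "1 = d" using homD[of 1 0 0 0] by simp
    ultimately show False using q2 by simp
  qed
  have cY0: "cY = 0"
  proof (rule ccontr)
    assume "cY \<noteq> 0"
    hence "?q = d" using homD[of 0 ?q 0 0] unfolding cY_def by simp
    moreover have "coeff4 h 0 1 0 0 \<noteq> 0" using z2[of 0 1 0 0] \<open>cY \<noteq> 0\<close> q2 unfolding ch2 by auto
    hence "1 = d" using homD[of 0 1 0 0] by simp
    ultimately show False using q2 by simp
  qed
  have cZ0: "cZ = 0"
  proof (rule ccontr)
    assume "cZ \<noteq> 0"
    hence "?q = d" using homD[of 0 0 ?q 0] unfolding cZ_def by simp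
    moreover have "coeff4 h 0 0 1 0 \<noteq> 0" using z2[of 0 0 1 0] \<open>cZ \<noteq> 0\<close> q2 unfolding ch2 by auto
    hence "1 = d" using homD[of 0 0 1 0] by simp
    ultimately show False using q2 by simp
  qed
  have cW0: "cW = 0"
  proof (rule ccontr)
    assume "cW \<noteq> 0"
    hence "?q = d" using homD[of 0 0 0 ?q] unfolding cW_def by simp
    moreover have "coeff4 h 0 0 0 1 \<noteq> 0" using z2[of 0 0 0 1] \<open>cW \<noteq> 0\<close> q2 unfolding ch2 by auto
    hence "1 = d" using homD[of 0 0 0 1] by simp
    ultimately show False using q2 by simp
  qed
  have "coeff4 h i j k l = 0" for i j k l using z2[of i j k l] unfolding ch2 cX0 cY0 cZ0 cW0 minus_zero if_cancel by simp
  hence "h = 0" by (rule coeff4_zero_imp)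
  thus False using hnz by simp
qed



theorem lemma3p2:
  fixes q :: nat
  defines "q \<equiv> CARD('a)"
  shows "(\<forall>\<phi> :: 'a \<Rightarrow> 'b::alg_closed_field. field_emb \<phi> \<longrightarrow>
            nonsingular4 (map4 \<phi> (g_surf q :: ('a::{finite,field}) mpoly4)) \<and>
            irreducible (map4 \<phi> (g_surf q :: 'a mpoly4)))
       \<and> (g_surf q :: 'a mpoly4) \<noteq> 0 \<and> homogeneous4 (g_surf q :: 'a mpoly4) (q + 1)
       \<and> hyp_points (g_surf q :: 'a mpoly4) = proj_points
       \<and> (\<forall>(h :: 'a mpoly4) d. h \<noteq> 0 \<and> homogeneous4 h d \<and> hyp_points h = proj_points
            \<longrightarrow> q + 1 \<le> d)"
proof (intro conjI allI impI)
  have q2: "q \<ge> 2" unfolding q_def by (rule card_ge2)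
  fix \<phi> :: "'a \<Rightarrow> 'b" assume e: "field_emb \<phi>"
  have mg: "map4 \<phi> (g_surf q :: 'a mpoly4) = g_surf q" by (rule map_g[OF e])
  show "nonsingular4 (map4 \<phi> (g_surf q :: 'a mpoly4))"
    unfolding mg by (rule nonsing_g[OF _ q2]) (use char_b[OF e] in \<open>simp add: q_def\<close>)
  show "irreducible (map4 \<phi> (g_surf q :: 'a mpoly4))"
    unfolding mg by (rule irr_g[OF q2])
next
  show "(g_surf q :: 'a mpoly4) \<noteq> 0" using g_props[where 'a='a] unfolding q_def by blast
  show "homogeneous4 (g_surf q :: 'a mpoly4) (q + 1)" using g_props[where 'a='a] unfolding q_def by blast
  show "hyp_points (g_surf q :: 'a mpoly4) = proj_points" using g_props[where 'a='a] unfolding q_def by blast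
next
  fix h :: "'a mpoly4" and d :: nat
  assume "h \<noteq> 0 \<and> homogeneous4 h d \<and> hyp_points h = proj_points"
  thus "q + 1 \<le> d" unfolding q_def using min_deg by blast
qed

end
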